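(* Let $f:\mathbb{R}^d\to\mathbb{R}$ be convex, twice continuously differentiable with $\nabla^2 f(x)\succ0$ for all $x$, and $L_{\text{semi}}$-semi-strongly self-concordant; let $L_{\text{est}}\ge L_{\text{semi}}$; let $x_0\in\mathbb{R}^d$ and assume $f$ has a unique minimizer $x_*$ and the level set $\mathcal L(x_0)=\{x:f(x)\le f(x_0)\}$ is bounded. Let $(x_t)$ be the AICN iterates from $x_0$. Then for every $k\ge1$, $$f(x_{k+1})-f(x_* )\le\frac{9L_{\text{est}}D^3}{k^2}\le\frac{9L_{\text{est}}R^3}{k^2},$$ where $D=\max_{0\le t\le k+1}\|x_t-x_*\|_{x_t}$ and $R=\sup_{x\in\mathcal L(x_0)}\big(\|x-x_*\|_{x_*}^2+L_{\text{est}}\|x-x_*\|_{x_*}^3\big)^{1/2}$.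
   Context: Local norms: $\|h\|_x=\langle\nabla^2 f(x)h,h\rangle^{1/2}$, $\|g\|_x^*=\langle g,[\nabla^2 f(x)]^{-1}g\rangle^{1/2}$; $\|H\|_{op}=\sup_{v\neq0}\|Hv\|_x^*/\|v\|_x$ at base point $x$. $f$ is $L_{\text{semi}}$-semi-strongly self-concordant if $\|\nabla^2 f(y)-\nabla^2 f(x)\|_{op}\le L_{\text{semi}}\|y-x\|_x$ for all $x,y$ (operator norm at base point $x$). AICN (Affine-Invariant Cubic Newton) with parameter $L_{\text{est}}>0$ from $x_0$: $x_{k+1}=x_k-\alpha_k[\nabla^2 f(x_k)]^{-1}\nabla f(x_k)$ with $\alpha_k=\frac{-1+\sqrt{1+2L_{\text{est}}\|\nabla f(x_k)\|_{x_k}^*}}{L_{\text{est}}\|\nabla f(x_k)\|_{x_k}^*}$ (and $\alpha_k:=1$ if $\nabla f(x_k)=0$, so then $x_{k+1}=x_k$). *)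

theory Defs
  imports "HOL-Analysis.Analysis"
begin

text \<open>Hessian is given as a matrix-valued function H :: real^'n \<Rightarrow> real^'n^'n.\<close>

definition loc_norm :: "(real^'n \<Rightarrow> real^'n^'n) \<Rightarrow> real^'n \<Rightarrow> real^'n \<Rightarrow> real" where
  "loc_norm H x h = sqrt (h \<bullet> (H x *v h))"

definition dual_norm :: "(real^'n \<Rightarrow> real^'n^'n) \<Rightarrow> real^'n \<Rightarrow> real^'n \<Rightarrow> real" where
  "dual_norm H x g = sqrt (g \<bullet> (matrix_inv (H x) *v g))"

definition op_norm :: "(real^'n \<Rightarrow> real^'n^'n) \<Rightarrow> real^'n \<Rightarrow> real^'n^'n \<Rightarrow> real" where
  "op_norm H x M = (SUP v\<in>{v. v \<noteq> 0}. dual_norm H x (M *v v) / loc_norm H x v)"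

definition semi_strongly_sc :: "(real^'n \<Rightarrow> real^'n^'n) \<Rightarrow> real \<Rightarrow> bool" where
  "semi_strongly_sc H L \<longleftrightarrow> (\<forall>x y. op_norm H x (H y - H x) \<le> L * loc_norm H x (y - x))"

definition aicn_alpha :: "(real^'n \<Rightarrow> real^'n) \<Rightarrow> (real^'n \<Rightarrow> real^'n^'n) \<Rightarrow> real \<Rightarrow> real^'n \<Rightarrow> real" where
  "aicn_alpha G H L x =
     (if G x = 0 then 1
      else (-1 + sqrt (1 + 2 * L * dual_norm H x (G x))) / (L * dual_norm H x (G x)))"

definition aicn_step :: "(real^'n \<Rightarrow> real^'n) \<Rightarrow> (real^'n \<Rightarrow> real^'n^'n) \<Rightarrow> real \<Rightarrow> real^'n \<Rightarrow> real^'n" where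
  "aicn_step G H L x = x - aicn_alpha G H L x *\<^sub>R (matrix_inv (H x) *v G x)"

fun aicn :: "(real^'n \<Rightarrow> real^'n) \<Rightarrow> (real^'n \<Rightarrow> real^'n^'n) \<Rightarrow> real \<Rightarrow> real^'n \<Rightarrow> nat \<Rightarrow> real^'n" where
  "aicn G H L x0 0 = x0"
| "aicn G H L x0 (Suc k) = aicn_step G H L (aicn G H L x0 k)"

end

theory Submission
  imports Defs
begin


lemma taylor_upper1:
  fixes p p' p'' :: "real \<Rightarrow> real"
  assumes d1: "\<And>t. (p has_real_derivative p' t) (at t)"
    and d2: "\<And>t. (p' has_real_derivative p'' t) (at t)"
    and b: "\<And>t. t \<in> {0..1} \<Longrightarrow> p'' t \<le> Q + B*t"
  shows "p 1 \<le> p 0 + p' 0 + Q/2 + B/6"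
proof -
  define q' where "q' t = p' t - p' 0 - Q*t - B*t^2/2" for t
  have dq': "(q' has_real_derivative (p'' t - Q - B*t)) (at t)" for t
    unfolding q'_def[abs_def] by (rule derivative_eq_intros d2 refl | simp)+
  have q'le: "q' t \<le> 0" if "t \<in> {0..1}" for t
  proof -
    have "q' t \<le> q' 0"
    proof (rule deriv_nonpos_imp_antimono[of 0 t q' "\<lambda>t. p'' t - Q - B*t"])
      fix x assume x: "x \<in> {0..t}"
      then have "x \<in> {0..1}" using that by auto
      from b[OF this] show "p'' x - Q - B*x \<le> 0" by simp
    qed (use dq' that in auto)
    then show ?thesis by (simp add: q'_def)
  qed
  define q where "q t = p t - p 0 - p' 0 * t - Q*t^2/2 - B*t^3/6" for t
  have dq: "(q has_real_derivative q' t) (at t)" for t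
    unfolding q_def[abs_def] q'_def
    by (rule derivative_eq_intros d1 refl | simp)+
  have "q 1 \<le> q 0"
    apply (rule deriv_nonpos_imp_antimono[of 0 1 q q'])
    using dq q'le by auto
  then show ?thesis by (simp add: q_def)
qed

lemma taylor_lower1:
  fixes p p' p'' :: "real \<Rightarrow> real"
  assumes d1: "\<And>t. (p has_real_derivative p' t) (at t)"
    and d2: "\<And>t. (p' has_real_derivative p'' t) (at t)"
    and b: "\<And>t. t \<in> {0..1} \<Longrightarrow> p'' t \<ge> Q - B*t"
  shows "p 1 \<ge> p 0 + p' 0 + Q/2 - B/6"
proof -
  have "(\<lambda>t. - p t) 1 \<le> (\<lambda>t. - p t) 0 + (\<lambda>t. - p' t) 0 + (-Q)/2 + B/6"
  proof (rule taylor_upper1[where p''="\<lambda>t. - p'' t"])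
    fix t :: real assume "t \<in> {0..1}"
    from b[OF this] show "- p'' t \<le> - Q + B*t" by simp
  qed (use d1 d2 in \<open>auto intro!: derivative_eq_intros\<close>)
  then show ?thesis by simp
qed




lemma quad_disc:
  fixes a b c :: real
  assumes "\<And>l. 0 \<le> l^2 * a + 2*l*c + b" and "a \<ge> 0"
  shows "c^2 \<le> a*b"
proof (cases "a > 0")
  case True
  have "0 \<le> (-c/a)^2 * a + 2*(-c/a)*c + b" by (rule assms(1))
  also have "\<dots> = b - c^2/a" using True by (simp add: power2_eq_square field_simps)
  finally show ?thesis using True by (simp add: field_simps)
next
  case False
  then have a0: "a = 0" using assms(2) by simp
  have "c = 0"
  proof (rule ccontr)
    assume "c \<noteq> 0"
    have "0 \<le> (-(b+1)/(2*c))^2 * a + 2*(-(b+1)/(2*c))*c + b" by (rule assms(1))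
    also have "\<dots> = -1" using a0 \<open>c \<noteq> 0\<close> by (simp add: field_simps)
    finally show False by simp
  qed
  then show ?thesis using a0 by simp
qed

lemma hd_real: "(p has_derivative (\<lambda>s. s * c)) F \<Longrightarrow> (p has_real_derivative c) F"
  by (simp add: has_field_derivative_def mult.commute[of _ c])

locale aicn_setup =
  fixes f :: "real^'n \<Rightarrow> real" and G :: "real^'n \<Rightarrow> real^'n"
    and H :: "real^'n \<Rightarrow> real^'n^'n" and Ls :: real
  assumes grad: "\<And>x. (f has_derivative (\<lambda>h. G x \<bullet> h)) (at x)"
    and hess: "\<And>x. (G has_derivative (\<lambda>h. H x *v h)) (at x)"
    and hcont: "continuous_on UNIV H"
    and pd: "\<And>x v. v \<noteq> 0 \<Longrightarrow> v \<bullet> (H x *v v) > 0"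
    and ssc: "semi_strongly_sc H Ls"
begin

lemma Hpsd: "v \<bullet> (H x *v v) \<ge> 0"
  by (cases "v = 0") (auto intro: less_imp_le pd)

lemma loc_sq: "(loc_norm H x h)^2 = h \<bullet> (H x *v h)"
  unfolding loc_norm_def by (rule real_sqrt_pow2[OF Hpsd])

lemma loc_nonneg: "loc_norm H x h \<ge> 0"
  unfolding loc_norm_def by (rule real_sqrt_ge_zero[OF Hpsd])

lemma loc_scale: "loc_norm H x (c *\<^sub>R h) = \<bar>c\<bar> * loc_norm H x h"
proof -
  have "(c *\<^sub>R h) \<bullet> (H x *v (c *\<^sub>R h)) = c^2 * (h \<bullet> (H x *v h))"
    by (simp add: matrix_vector_mult_scaleR power2_eq_square)
  then show ?thesis unfolding loc_norm_def by (simp add: real_sqrt_mult)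
qed

lemma loc_pos: "h \<noteq> 0 \<Longrightarrow> loc_norm H x h > 0"
  unfolding loc_norm_def using pd by simp

lemma Hinj: "H x *v u = H x *v w \<Longrightarrow> u = w"
proof (rule ccontr)
  assume e: "H x *v u = H x *v w" and "u \<noteq> w"
  then have "u - w \<noteq> 0" by simp
  from pd[OF this, of x] e show False by (simp add: matrix_vector_mult_diff_distrib)
qed

lemma Hinvertible: "invertible (H x)"
proof -
  have "inj ((*v) (H x))" using Hinj by (auto intro: injI)
  then obtain B where "B ** H x = mat 1" using matrix_left_invertible_injective by blast
  then show ?thesis using invertible_left_inverse by blast
qed

lemma Hinv_props: "H x ** matrix_inv (H x) = mat 1 \<and> matrix_inv (H x) ** H x = mat 1"
proof -
  from Hinvertible[of x] obtain A' where "H x ** A' = mat 1 \<and> A' ** H x = mat 1"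
    unfolding invertible_def by blast
  then show ?thesis unfolding matrix_inv_def by (rule someI)
qed

lemma H_inv: "H x *v (matrix_inv (H x) *v g) = g"
  using Hinv_props by (simp add: matrix_vector_mul_assoc)

lemma inv_H: "matrix_inv (H x) *v (H x *v p) = p"
  using Hinv_props by (simp add: matrix_vector_mul_assoc)

lemma dline_f: "((\<lambda>t. f (x + t *\<^sub>R h)) has_real_derivative (G (x + t *\<^sub>R h) \<bullet> h)) (at t)"
proof -
  have l: "((\<lambda>t. x + t *\<^sub>R h) has_derivative (\<lambda>s. s *\<^sub>R h)) (at t)"
    by (rule derivative_eq_intros refl | simp)+
  have "((\<lambda>t. f (x + t *\<^sub>R h)) has_derivative (\<lambda>s. G (x + t *\<^sub>R h) \<bullet> (s *\<^sub>R h))) (at t)"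
    by (rule has_derivative_compose[OF l grad])
  then show ?thesis by (intro hd_real) simp
qed

lemma dline_G: "((\<lambda>t. G (x + t *\<^sub>R h) \<bullet> u) has_real_derivative ((H (x + t *\<^sub>R h) *v h) \<bullet> u)) (at t)"
proof -
  have l: "((\<lambda>t. x + t *\<^sub>R h) has_derivative (\<lambda>s. s *\<^sub>R h)) (at t)"
    by (rule derivative_eq_intros refl | simp)+
  have "((\<lambda>t. G (x + t *\<^sub>R h)) has_derivative (\<lambda>s. H (x + t *\<^sub>R h) *v (s *\<^sub>R h))) (at t)"
    by (rule has_derivative_compose[OF l hess])
  then have "((\<lambda>t. G (x + t *\<^sub>R h) \<bullet> u) has_derivative (\<lambda>s. (H (x + t *\<^sub>R h) *v (s *\<^sub>R h)) \<bullet> u)) (at t)"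
    by (rule has_derivative_inner_left)
  then show ?thesis by (intro hd_real) (simp add: matrix_vector_mult_scaleR)
qed

lemma mixed_eq:
  fixes u v x and e :: real
  assumes e: "e > 0"
  shows "\<exists>y. norm (y - x) \<le> e * (norm u + norm v) \<and>
     f (x + e *\<^sub>R u + e *\<^sub>R v) - f (x + e *\<^sub>R u) - f (x + e *\<^sub>R v) + f x = e^2 * ((H y *v v) \<bullet> u)"
proof -
  define r where "r s = f ((x + e *\<^sub>R v) + s *\<^sub>R u) - f (x + s *\<^sub>R u)" for s
  have dr: "(r has_real_derivative (G ((x + e *\<^sub>R v) + s *\<^sub>R u) \<bullet> u - G (x + s *\<^sub>R u) \<bullet> u)) (at s)" for s
    unfolding r_def[abs_def] by (intro DERIV_diff dline_f)
  obtain z where z: "0 < z" "z < e" "r e - r 0 = (e - 0) * (G ((x + e *\<^sub>R v) + z *\<^sub>R u) \<bullet> u - G (x + z *\<^sub>R u) \<bullet> u)"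
    using MVT2[OF e, where f=r and f'="\<lambda>s. G ((x + e *\<^sub>R v) + s *\<^sub>R u) \<bullet> u - G (x + s *\<^sub>R u) \<bullet> u"] dr by blast
  define w where "w t = G ((x + z *\<^sub>R u) + t *\<^sub>R v) \<bullet> u" for t
  have dw: "(w has_real_derivative ((H ((x + z *\<^sub>R u) + t *\<^sub>R v) *v v) \<bullet> u)) (at t)" for t
    unfolding w_def[abs_def] by (rule dline_G)
  obtain y where y: "0 < y" "y < e" "w e - w 0 = (e - 0) * ((H ((x + z *\<^sub>R u) + y *\<^sub>R v) *v v) \<bullet> u)"
    using MVT2[OF e, where f=w and f'="\<lambda>t. (H ((x + z *\<^sub>R u) + t *\<^sub>R v) *v v) \<bullet> u"] dw by blast
  have gw: "G ((x + e *\<^sub>R v) + z *\<^sub>R u) \<bullet> u - G (x + z *\<^sub>R u) \<bullet> u = w e - w 0"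
    unfolding w_def by (simp add: add.commute add.left_commute)
  have eq: "f (x + e *\<^sub>R u + e *\<^sub>R v) - f (x + e *\<^sub>R u) - f (x + e *\<^sub>R v) + f x = r e - r 0"
    unfolding r_def by (simp add: add.commute add.left_commute)
  also have "\<dots> = e * (w e - w 0)" using z(3) gw by simp
  also have "\<dots> = e^2 * ((H ((x + z *\<^sub>R u) + y *\<^sub>R v) *v v) \<bullet> u)"
    using y(3) by (simp add: power2_eq_square)
  finally have eq2: "f (x + e *\<^sub>R u + e *\<^sub>R v) - f (x + e *\<^sub>R u) - f (x + e *\<^sub>R v) + f x = e^2 * ((H ((x + z *\<^sub>R u) + y *\<^sub>R v) *v v) \<bullet> u)" .
  have nrm: "norm ((x + z *\<^sub>R u + y *\<^sub>R v) - x) \<le> e * (norm u + norm v)"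
  proof -
    have "norm ((x + z *\<^sub>R u + y *\<^sub>R v) - x) \<le> norm (z *\<^sub>R u) + norm (y *\<^sub>R v)"
      using norm_triangle_ineq[of "z *\<^sub>R u" "y *\<^sub>R v"] by (simp add: algebra_simps)
    also have "\<dots> = z * norm u + y * norm v" using z y by simp
    also have "\<dots> \<le> e * norm u + e * norm v"
      using z y by (intro add_mono mult_right_mono) auto
    finally show ?thesis by (simp add: algebra_simps)
  qed
  show ?thesis using nrm eq2 by blast
qed

lemma cont_form: "isCont (\<lambda>y. (H y *v v) \<bullet> u) x"
proof -
  have lin: "bounded_linear (\<lambda>M::real^'n^'n. (M *v v) \<bullet> u)"
    unfolding linear_conv_bounded_linear[symmetric]
    by (rule linearI) (simp_all add: matrix_vector_mult_add_rdistrib inner_add_left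
        scaleR_matrix_vector_assoc[symmetric])
  have "isCont H x" using hcont by (simp add: continuous_on_eq_continuous_at)
  moreover have "isCont (\<lambda>M::real^'n^'n. (M *v v) \<bullet> u) (H x)" by (rule linear_continuous_at[OF lin])
  ultimately show ?thesis by (rule isCont_o2)
qed

lemma symm: "(H x *v u) \<bullet> v = u \<bullet> (H x *v v)"
proof -
  define a where "a = (H x *v v) \<bullet> u"
  define b where "b = (H x *v u) \<bullet> v"
  have "a = b"
  proof (rule ccontr)
    assume ne: "a \<noteq> b"
    define ep where "ep = \<bar>a - b\<bar> / 2"
    have ep: "ep > 0" using ne by (simp add: ep_def)
    have c1: "\<forall>e>0. \<exists>d>0. \<forall>y. dist y x < d \<longrightarrow> dist ((H y *v v) \<bullet> u) a < e"
      using cont_form[where x=x and v=v and u=u] unfolding continuous_at_eps_delta a_def .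
    obtain d1 where d1: "d1 > 0" "\<forall>y. dist y x < d1 \<longrightarrow> dist ((H y *v v) \<bullet> u) a < ep"
      using c1[rule_format, OF ep] by (elim exE conjE) (rule that)
    have c2: "\<forall>e>0. \<exists>d>0. \<forall>y. dist y x < d \<longrightarrow> dist ((H y *v u) \<bullet> v) b < e"
      using cont_form[where x=x and v=u and u=v] unfolding continuous_at_eps_delta b_def .
    obtain d2 where d2: "d2 > 0" "\<forall>y. dist y x < d2 \<longrightarrow> dist ((H y *v u) \<bullet> v) b < ep"
      using c2[rule_format, OF ep] by (elim exE conjE) (rule that)
    define K where "K = norm u + norm v + 1"
    have K: "K > 0" unfolding K_def by (simp add: add_nonneg_pos)
    define e where "e = min d1 d2 / (2 * K)"
    have e: "e > 0" using d1 d2 K by (simp add: e_def)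
    have eK: "e * (norm u + norm v) < min d1 d2"
    proof -
      have "e * (norm u + norm v) \<le> e * K" using e by (simp add: K_def)
      also have "\<dots> = min d1 d2 / 2" using K by (simp add: e_def)
      also have "\<dots> < min d1 d2"
      proof -
        have "min d1 d2 > 0" using d1(1) d2(1) by simp
        then show ?thesis by linarith
      qed
      finally show ?thesis .
    qed
    obtain y1 where y1: "norm (y1 - x) \<le> e * (norm u + norm v)"
      "f (x + e *\<^sub>R u + e *\<^sub>R v) - f (x + e *\<^sub>R u) - f (x + e *\<^sub>R v) + f x = e^2 * ((H y1 *v v) \<bullet> u)"
      using mixed_eq[OF e, of x u v] by blast
    obtain y2 where y2: "norm (y2 - x) \<le> e * (norm v + norm u)"
      "f (x + e *\<^sub>R v + e *\<^sub>R u) - f (x + e *\<^sub>R v) - f (x + e *\<^sub>R u) + f x = e^2 * ((H y2 *v u) \<bullet> v)"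
      using mixed_eq[OF e, of x v u] by blast
    have sw: "x + e *\<^sub>R v + e *\<^sub>R u = x + e *\<^sub>R u + e *\<^sub>R v" by (simp add: algebra_simps)
    have "e^2 * ((H y2 *v u) \<bullet> v) = f (x + e *\<^sub>R u + e *\<^sub>R v) - f (x + e *\<^sub>R u) - f (x + e *\<^sub>R v) + f x"
      using y2(2) unfolding sw by linarith
    then have "e^2 * ((H y1 *v v) \<bullet> u) = e^2 * ((H y2 *v u) \<bullet> v)" using y1(2) by linarith
    then have eqy: "(H y1 *v v) \<bullet> u = (H y2 *v u) \<bullet> v" using e by simp
    have "dist y1 x < d1" using y1(1) eK by (simp add: dist_norm)
    then have c1': "\<bar>(H y1 *v v) \<bullet> u - a\<bar> < ep" using d1(2) by (simp add: dist_real_def)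
    have "dist y2 x < d2" using y2(1) eK by (simp add: dist_norm add.commute)
    then have c2': "\<bar>(H y2 *v u) \<bullet> v - b\<bar> < ep" using d2(2) by (simp add: dist_real_def)
    from c1' c2' eqy have "\<bar>a - b\<bar> < 2 * ep" by linarith
    then show False by (simp add: ep_def)
  qed
  then show ?thesis unfolding a_def b_def by (simp add: inner_commute)
qed

end



lemma phi_min:
  fixes L s rs r :: real
  assumes "L > 0" "rs \<ge> 0" "r \<ge> 0" "s = rs + L*rs^2/2"
  shows "-s*rs + rs^2/2 + L*rs^3/6 \<le> -s*r + r^2/2 + L*r^3/6"
proof -
  have "(-s*r + r^2/2 + L*r^3/6) - (-s*rs + rs^2/2 + L*rs^3/6) = (r-rs)^2*(1/2 + L/6*(r+2*rs))"
    unfolding assms(4) by (simp add: field_simps power2_eq_square power3_eq_cube)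
  also have "\<dots> \<ge> 0" using assms by (intro mult_nonneg_nonneg) auto
  finally show ?thesis by simp
qed

context aicn_setup begin

lemma CS: "\<bar>(H x *v p) \<bullet> h\<bar> \<le> loc_norm H x p * loc_norm H x h"
proof -
  define a where "a = p \<bullet> (H x *v p)"
  define b where "b = h \<bullet> (H x *v h)"
  define c where "c = (H x *v p) \<bullet> h"
  have "0 \<le> l^2 * a + 2*l*c + b" for l
  proof -
    have "0 \<le> (l *\<^sub>R p + h) \<bullet> (H x *v (l *\<^sub>R p + h))" by (rule Hpsd)
    also have "\<dots> = l^2*a + 2*l*c + b"
      using symm[of x p h] unfolding a_def b_def c_def
      by (simp add: matrix_vector_right_distrib matrix_vector_mult_scaleR inner_add_left
          inner_add_right inner_commute[of h "H x *v p"] power2_eq_square algebra_simps)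
    finally show ?thesis .
  qed
  then have "c^2 \<le> a*b" using quad_disc Hpsd a_def by blast
  then have "sqrt (c^2) \<le> sqrt (a*b)" by (rule real_sqrt_le_mono)
  then show ?thesis unfolding loc_norm_def a_def b_def c_def by (simp add: real_sqrt_mult)
qed

lemma dual_eq: "dual_norm H x (H x *v p) = loc_norm H x p"
  unfolding dual_norm_def loc_norm_def by (simp add: inv_H inner_commute)

lemma dual_scale: "dual_norm H x (c *\<^sub>R w) = \<bar>c\<bar> * dual_norm H x w"
proof -
  have "w = H x *v (matrix_inv (H x) *v w)" by (simp add: H_inv)
  then obtain q where q: "w = H x *v q" by blast
  have "c *\<^sub>R w = H x *v (c *\<^sub>R q)" using q by (simp add: matrix_vector_mult_scaleR)
  then show ?thesis using q by (simp add: dual_eq loc_scale)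
qed

lemma op_bdd: "bdd_above ((\<lambda>v. dual_norm H x (M *v v) / loc_norm H x v) ` {v. v \<noteq> 0})"
proof -
  define r where "r v = dual_norm H x (M *v v) / loc_norm H x v" for v
  have cont: "continuous_on (sphere 0 1) r"
    unfolding r_def dual_norm_def loc_norm_def
    by (intro continuous_intros bounded_linear.continuous_on[OF matrix_vector_mul_bounded_linear])
       (auto simp: loc_norm_def; metis norm_zero pd zero_neq_one less_irrefl)
  have "compact (r ` sphere 0 1)" by (rule compact_continuous_image[OF cont compact_sphere])
  then have bd: "bdd_above (r ` sphere 0 1)" by (intro bounded_imp_bdd_above compact_imp_bounded)
  have "r ` {v. v \<noteq> 0} \<subseteq> r ` sphere 0 1"
  proof
    fix y assume "y \<in> r ` {v. v \<noteq> 0}"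
    then obtain v where v: "v \<noteq> 0" "y = r v" by auto
    define u where "u = (1 / norm v) *\<^sub>R v"
    have u: "u \<in> sphere 0 1" using v by (simp add: u_def)
    have "r u = r v" using v loc_pos[OF v(1), of x]
      by (simp add: r_def u_def matrix_vector_mult_scaleR dual_scale loc_scale)
    then show "y \<in> r ` sphere 0 1" using u v by (metis image_eqI)
  qed
  then have X: "bdd_above (r ` {v. v \<noteq> 0})" by (rule bdd_above_mono[OF bd])
  then show ?thesis by (simp add: r_def[abs_def])
qed

lemma ssc_bound: "\<bar>h \<bullet> ((H y - H x) *v h)\<bar> \<le> Ls * loc_norm H x (y - x) * (loc_norm H x h)^2"
proof (cases "h = 0")
  case True then show ?thesis by (simp add: loc_norm_def)
next
  case False
  define w where "w = (H y - H x) *v h"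
  define q where "q = matrix_inv (H x) *v w"
  have wq: "w = H x *v q" by (simp add: q_def H_inv)
  have dq: "dual_norm H x w = loc_norm H x q" using dual_eq[of x q] wq by simp
  have "\<bar>h \<bullet> w\<bar> = \<bar>(H x *v q) \<bullet> h\<bar>" using wq by (simp add: inner_commute)
  also have "\<dots> \<le> loc_norm H x q * loc_norm H x h" by (rule CS)
  also have "\<dots> = dual_norm H x w * loc_norm H x h" using dq by simp
  finally have 1: "\<bar>h \<bullet> w\<bar> \<le> dual_norm H x w * loc_norm H x h" .
  have "dual_norm H x w / loc_norm H x h \<le> op_norm H x (H y - H x)"
    unfolding op_norm_def w_def by (rule cSUP_upper) (use False op_bdd in auto)
  also have "\<dots> \<le> Ls * loc_norm H x (y - x)" using ssc unfolding semi_strongly_sc_def by blast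
  finally have "dual_norm H x w \<le> Ls * loc_norm H x (y - x) * loc_norm H x h"
    using loc_pos[OF False, of x] by (simp add: divide_le_eq)
  then have "dual_norm H x w * loc_norm H x h \<le> Ls * loc_norm H x (y - x) * loc_norm H x h * loc_norm H x h"
    by (rule mult_right_mono) (simp add: loc_nonneg)
  then show ?thesis using 1 unfolding w_def by (simp add: power2_eq_square mult.assoc)
qed

lemma hess_diff: "\<bar>(H y *v h) \<bullet> h - (H x *v h) \<bullet> h\<bar> \<le> Ls * loc_norm H x (y - x) * (loc_norm H x h)^2"
  using ssc_bound[of h y x]
  by (simp add: matrix_vector_mult_diff_rdistrib inner_diff_right inner_commute[of h "H y *v h"]
      inner_commute[of h "H x *v h"])

lemma taylor_up: "f (x + h) \<le> f x + G x \<bullet> h + ((H x *v h) \<bullet> h)/2 + Ls * (loc_norm H x h)^3 / 6"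
proof -
  have "(\<lambda>t. f (x + t *\<^sub>R h)) 1 \<le> (\<lambda>t. f (x + t *\<^sub>R h)) 0 + (\<lambda>t. G (x + t *\<^sub>R h) \<bullet> h) 0
          + ((H x *v h) \<bullet> h)/2 + (Ls * (loc_norm H x h)^3)/6"
  proof (rule taylor_upper1[where p''="\<lambda>t. (H (x + t *\<^sub>R h) *v h) \<bullet> h"])
    show "\<And>t. ((\<lambda>t. f (x + t *\<^sub>R h)) has_real_derivative G (x + t *\<^sub>R h) \<bullet> h) (at t)"
      by (rule dline_f)
    show "\<And>t. ((\<lambda>t. G (x + t *\<^sub>R h) \<bullet> h) has_real_derivative (H (x + t *\<^sub>R h) *v h) \<bullet> h) (at t)"
      by (rule dline_G)
    fix t :: real assume t: "t \<in> {0..1}"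
    have "\<bar>(H (x + t *\<^sub>R h) *v h) \<bullet> h - (H x *v h) \<bullet> h\<bar> \<le> Ls * loc_norm H x (t *\<^sub>R h) * (loc_norm H x h)^2"
      using hess_diff[of "x + t *\<^sub>R h" h x] by simp
    also have "\<dots> = Ls * (loc_norm H x h)^3 * t" using t
      by (simp add: loc_scale power3_eq_cube power2_eq_square)
    finally show "(H (x + t *\<^sub>R h) *v h) \<bullet> h \<le> (H x *v h) \<bullet> h + Ls * (loc_norm H x h)^3 * t"
      by linarith
  qed
  then show ?thesis by simp
qed

lemma taylor_low: "f (x + h) \<ge> f x + G x \<bullet> h + ((H x *v h) \<bullet> h)/2 - Ls * (loc_norm H x h)^3 / 6"
proof -
  have "(\<lambda>t. f (x + t *\<^sub>R h)) 1 \<ge> (\<lambda>t. f (x + t *\<^sub>R h)) 0 + (\<lambda>t. G (x + t *\<^sub>R h) \<bullet> h) 0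
          + ((H x *v h) \<bullet> h)/2 - (Ls * (loc_norm H x h)^3)/6"
  proof (rule taylor_lower1[where p''="\<lambda>t. (H (x + t *\<^sub>R h) *v h) \<bullet> h"])
    show "\<And>t. ((\<lambda>t. f (x + t *\<^sub>R h)) has_real_derivative G (x + t *\<^sub>R h) \<bullet> h) (at t)"
      by (rule dline_f)
    show "\<And>t. ((\<lambda>t. G (x + t *\<^sub>R h) \<bullet> h) has_real_derivative (H (x + t *\<^sub>R h) *v h) \<bullet> h) (at t)"
      by (rule dline_G)
    fix t :: real assume t: "t \<in> {0..1}"
    have "\<bar>(H (x + t *\<^sub>R h) *v h) \<bullet> h - (H x *v h) \<bullet> h\<bar> \<le> Ls * loc_norm H x (t *\<^sub>R h) * (loc_norm H x h)^2"
      using hess_diff[of "x + t *\<^sub>R h" h x] by simp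
    also have "\<dots> = Ls * (loc_norm H x h)^3 * t" using t
      by (simp add: loc_scale power3_eq_cube power2_eq_square)
    finally show "(H x *v h) \<bullet> h - Ls * (loc_norm H x h)^3 * t \<le> (H (x + t *\<^sub>R h) *v h) \<bullet> h"
      by linarith
  qed
  then show ?thesis by simp
qed

lemma step:
  assumes L: "L > 0" "Ls \<le> L"
  shows "f (aicn_step G H L x) \<le> f x + G x \<bullet> h + ((H x *v h) \<bullet> h)/2 + L * (loc_norm H x h)^3/6"
proof (cases "G x = 0")
  case True
  have "aicn_step G H L x = x" by (simp add: aicn_step_def aicn_alpha_def True)
  moreover have "(H x *v h) \<bullet> h \<ge> 0" using Hpsd[of h x] by (simp add: inner_commute)
  moreover have "L * (loc_norm H x h)^3 \<ge> 0" using L loc_nonneg by simp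
  ultimately show ?thesis using True by simp
next
  case False
  define g where "g = G x"
  define p where "p = matrix_inv (H x) *v g"
  define sg where "sg = dual_norm H x g"
  have gp: "g = H x *v p" by (simp add: p_def H_inv)
  have s_eq: "sg = loc_norm H x p" using dual_eq[of x p] gp sg_def by simp
  have "p \<noteq> 0" using False gp g_def by auto
  then have spos: "sg > 0" using loc_pos s_eq by simp
  define rz where "rz = (sqrt (1 + 2*L* sg) - 1)/L"
  have alpha: "aicn_alpha G H L x = rz / sg"
    using spos L False by (simp add: aicn_alpha_def rz_def sg_def g_def)
  have sq: "sqrt (1 + 2*L* sg) = 1 + L*rz" using L by (simp add: rz_def)
  have "1 \<le> sqrt (1 + 2*L* sg)" using L spos by simp
  then have rs0: "rz \<ge> 0" using L by (simp add: rz_def)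
  have "(sqrt (1 + 2*L* sg))^2 = 1 + 2*L* sg" using spos L by simp
  with sq have "1 + 2*L* sg = (1 + L*rz)^2" by simp
  then have "L * (2* sg) = L * (2*rz + L*rz^2)" by (simp add: power2_eq_square algebra_simps)
  then have "2* sg = 2*rz + L*rz^2" using L by simp
  then have s_rs: "sg = rz + L*rz^2/2" by simp
  define h0 where "h0 = (-(rz/sg)) *\<^sub>R p"
  have step_eq: "aicn_step G H L x = x + h0"
    by (simp add: aicn_step_def alpha h0_def p_def g_def)
  have gp2: "g \<bullet> p = sg^2" using gp s_eq loc_sq[of x p] by (simp add: inner_commute)
  have lh0: "loc_norm H x h0 = rz"
  proof -
    have "loc_norm H x h0 = \<bar>-(rz/sg)\<bar> * loc_norm H x p" unfolding h0_def by (rule loc_scale)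
    also have "\<dots> = (rz/sg) * sg"
    proof -
      have nn: "rz/sg \<ge> 0" using spos rs0 by simp
      show ?thesis by (simp only: abs_minus_cancel abs_of_nonneg[OF nn] s_eq[symmetric])
    qed
    also have "\<dots> = rz" using spos by simp
    finally show ?thesis .
  qed
  have gh0: "g \<bullet> h0 = - rz * sg" using spos gp2 by (simp add: h0_def power2_eq_square)
  have qh0: "(H x *v h0) \<bullet> h0 = rz^2" using loc_sq[of x h0] lh0 by (simp add: inner_commute)
  have "f (x + h0) \<le> f x + G x \<bullet> h0 + ((H x *v h0) \<bullet> h0)/2 + Ls * (loc_norm H x h0)^3 / 6"
    by (rule taylor_up)
  also have "\<dots> = f x - rz * sg + rz^2/2 + Ls * rz^3/6" using gh0 qh0 lh0 g_def by simp
  also have "\<dots> \<le> f x - sg*rz + rz^2/2 + L * rz^3/6"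
  proof -
    have "Ls * rz^3 \<le> L * rz^3" using L rs0 by (intro mult_right_mono) auto
    then show ?thesis by (simp add: mult.commute)
  qed
  also have "\<dots> \<le> f x - sg * loc_norm H x h + (loc_norm H x h)^2/2 + L * (loc_norm H x h)^3/6"
    using phi_min[OF L(1) rs0 loc_nonneg s_rs, of x h] by simp
  also have "\<dots> \<le> f x + G x \<bullet> h + ((H x *v h) \<bullet> h)/2 + L * (loc_norm H x h)^3/6"
  proof -
    have "\<bar>(H x *v p) \<bullet> h\<bar> \<le> loc_norm H x p * loc_norm H x h" by (rule CS)
    then have "- sg * loc_norm H x h \<le> G x \<bullet> h" using gp s_eq g_def by simp
    moreover have "(loc_norm H x h)^2 = (H x *v h) \<bullet> h" using loc_sq by (simp add: inner_commute)
    ultimately show ?thesis by simp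
  qed
  finally show ?thesis using step_eq by simp
qed

lemma mono_step: assumes "L > 0" "Ls \<le> L" shows "f (aicn_step G H L x) \<le> f x"
  using step[OF assms, of x 0] by (simp add: loc_norm_def)

end



lemma arith_step:
  fixes q C :: real
  assumes q: "q \<ge> 3" and C: "C \<ge> 0"
  shows "(1 - 3/q) * (27*C/(q-1)^2) + (3/q)^3 * C \<le> 27*C/q^2"
proof -
  define p where "p = q - 1"
  have p0: "p > 0" and q0: "q > 0" using q by (auto simp: p_def)
  have e: "27*C/q^2 - ((1 - 3/q) * (27*C/p^2) + (3/q)^3 * C) = 27*C*(q*p^2 - q^2*(q-3) - p^2)/(q^3*p^2)"
    using p0 q0 by (simp add: divide_simps) algebra
  have n: "q*p^2 - q^2*(q-3) - p^2 = 3*q - 1" unfolding p_def by algebra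
  have "27*C*(q*p^2 - q^2*(q-3) - p^2)/(q^3*p^2) \<ge> 0"
    unfolding n using q0 p0 q C by (intro divide_nonneg_pos mult_nonneg_nonneg) auto
  then show ?thesis using e unfolding p_def by simp
qed

theorem theorem6:
  fixes f :: "real^'n \<Rightarrow> real" and G :: "real^'n \<Rightarrow> real^'n"
    and H :: "real^'n \<Rightarrow> real^'n^'n"
    and L_semi L_est :: real and x0 xs :: "real^'n" and k :: nat
  assumes convex: "convex_on UNIV f"
    and grad: "\<And>x. (f has_derivative (\<lambda>h. G x \<bullet> h)) (at x)"
    and hess: "\<And>x. (G has_derivative (\<lambda>h. H x *v h)) (at x)"
    and hess_cont: "continuous_on UNIV H"
    and hess_pd: "\<And>x v. v \<noteq> 0 \<Longrightarrow> v \<bullet> (H x *v v) > 0"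
    and ssc: "semi_strongly_sc H L_semi"
    and L_pos: "L_est > 0"
    and L_ge: "L_est \<ge> L_semi"
    and xs_min: "\<And>y. f xs \<le> f y"
    and xs_unique: "\<And>y. (\<forall>z. f y \<le> f z) \<Longrightarrow> y = xs"
    and level_bdd: "bounded {x. f x \<le> f x0}"
    and k: "k \<ge> 1"
  shows "f (aicn G H L_est x0 (k + 1)) - f xs
           \<le> 9 * L_est * (MAX t\<in>{0..k+1}. loc_norm H (aicn G H L_est x0 t) (aicn G H L_est x0 t - xs)) ^ 3 / (real k)^2
       \<and> 9 * L_est * (MAX t\<in>{0..k+1}. loc_norm H (aicn G H L_est x0 t) (aicn G H L_est x0 t - xs)) ^ 3 / (real k)^2
           \<le> 9 * L_est * (SUP x\<in>{x. f x \<le> f x0}. sqrt ((loc_norm H xs (x - xs))^2 + L_est * (loc_norm H xs (x - xs))^3)) ^ 3 / (real k)^2"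
proof -
  interpret A: aicn_setup f G H L_semi
    by (unfold_locales) (use grad hess hess_cont hess_pd ssc in auto)
  define X where "X t = aicn G H L_est x0 t" for t
  have Xs: "X (Suc t) = aicn_step G H L_est (X t)" for t by (simp add: X_def)
  define d where "d t = loc_norm H (X t) (X t - xs)" for t
  define D where "D = (MAX t\<in>{0..k+1}. d t)"
  define phi where "phi x = sqrt ((loc_norm H xs (x - xs))^2 + L_est * (loc_norm H xs (x - xs))^3)" for x
  define S where "S = {x. f x \<le> f x0}"
  define R where "R = (SUP x\<in>S. phi x)"
  have dnn: "d t \<ge> 0" for t unfolding d_def by (rule A.loc_nonneg)
  have dD: "d t \<le> D" if "t \<le> k+1" for t
    unfolding D_def using that by (intro Max_ge) auto
  have D0: "D \<ge> 0" using dD[of 0] dnn[of 0] by simp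
  have lvl: "f (X t) \<le> f x0" for t
  proof (induction t)
    case 0 then show ?case by (simp add: X_def)
  next
    case (Suc t)
    have "f (X (Suc t)) \<le> f (X t)" unfolding Xs by (rule A.mono_step[OF L_pos L_ge])
    then show ?case using Suc by simp
  qed
  have rec: "f (X (Suc t)) - f xs \<le> (1 - eta) * (f (X t) - f xs) + L_est/3 * eta^3 * (d t)^3"
    if eta: "0 \<le> eta" "eta \<le> 1" for t eta
  proof -
    define h where "h = eta *\<^sub>R (xs - X t)"
    have lh: "loc_norm H (X t) h = eta * d t"
    proof -
      have hh: "h = (-eta) *\<^sub>R (X t - xs)" by (simp add: h_def algebra_simps)
      have "loc_norm H (X t) h = \<bar>-eta\<bar> * d t" unfolding hh d_def by (rule A.loc_scale)
      then show ?thesis using eta by simp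
    qed
    have s1: "f (X (Suc t)) \<le> f (X t) + G (X t) \<bullet> h + ((H (X t) *v h) \<bullet> h)/2 + L_est * (loc_norm H (X t) h)^3/6"
      unfolding Xs by (rule A.step[OF L_pos L_ge])
    have s2: "f (X t + h) \<ge> f (X t) + G (X t) \<bullet> h + ((H (X t) *v h) \<bullet> h)/2 - L_semi * (loc_norm H (X t) h)^3/6"
      by (rule A.taylor_low)
    have l3: "L_semi * (loc_norm H (X t) h)^3 \<le> L_est * (loc_norm H (X t) h)^3"
      using L_ge A.loc_nonneg by (intro mult_right_mono) auto
    have "X t + h = (1 - eta) *\<^sub>R X t + eta *\<^sub>R xs" by (simp add: h_def algebra_simps)
    then have cv: "f (X t + h) \<le> (1 - eta) * f (X t) + eta * f xs"
      using convex_onD[OF convex eta(1) eta(2)] by simp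
    have "(loc_norm H (X t) h)^3 = eta^3 * (d t)^3" using lh by (simp add: power_mult_distrib)
    then show ?thesis using s1 s2 l3 cv by (simp add: algebra_simps)
  qed
  define C where "C = L_est * D^3 / 3"
  have C0: "C \<ge> 0" using L_pos D0 by (simp add: C_def)
  have dC: "L_est/3 * (d t)^3 \<le> C" if "t \<le> k+1" for t
  proof -
    have "(d t)^3 \<le> D^3" using dD[OF that] dnn by (intro power_mono) auto
    then show ?thesis using L_pos by (simp add: C_def)
  qed
  have rate: "f (X t) - f xs \<le> 27*C/(real t + 1)^2" if t: "1 \<le> t" "t \<le> k+1" for t
    using t(1,2)
  proof (induction t rule: dec_induct)
    case base
    have "f (X (Suc 0)) - f xs \<le> (1 - 1) * (f (X 0) - f xs) + L_est/3 * 1^3 * (d 0)^3"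
      by (rule rec) auto
    also have "\<dots> \<le> C" using dC[of 0] by simp
    also have "\<dots> \<le> 27*C/(real 1 + 1)^2" using C0 by simp
    finally show ?case by simp
  next
    case (step n)
    define q where "q = real n + 2"
    have s3: "q \<ge> 3" using step.hyps by (simp add: q_def)
    have eta: "0 \<le> 3/q" "3/q \<le> 1" using s3 by auto
    have "f (X (Suc n)) - f xs \<le> (1 - 3/q) * (f (X n) - f xs) + L_est/3 * (3/q)^3 * (d n)^3"
      by (rule rec[OF eta])
    also have "\<dots> \<le> (1 - 3/q) * (27*C/(q-1)^2) + (3/q)^3 * C"
    proof (rule add_mono)
      have "f (X n) - f xs \<le> 27*C/(real n + 1)^2" using step.IH step.prems step.hyps by simp
      moreover have "real n + 1 = q - 1" by (simp add: q_def)
      ultimately show "(1 - 3/q) * (f (X n) - f xs) \<le> (1 - 3/q) * (27*C/(q-1)^2)"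
        using eta by (intro mult_left_mono) auto
      have "L_est/3 * (d n)^3 \<le> C" using dC[of n] step.hyps step.prems by simp
      then have "(3/q)^3 * (L_est/3 * (d n)^3) \<le> (3/q)^3 * C" using eta by (intro mult_left_mono) auto
      then show "L_est/3 * (3/q)^3 * (d n)^3 \<le> (3/q)^3 * C" by (simp add: algebra_simps)
    qed
    also have "\<dots> \<le> 27*C/q^2" by (rule arith_step[OF s3 C0])
    also have "\<dots> = 27*C/(real (Suc n) + 1)^2" by (simp add: q_def)
    finally show ?case .
  qed
  have kpos: "real k > 0" using k by simp
  have final1: "f (X (k+1)) - f xs \<le> 9 * L_est * D^3 / (real k)^2"
  proof -
    have "f (X (k+1)) - f xs \<le> 27*C/(real (k+1) + 1)^2" using rate[of "k+1"] k by simp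
    also have "\<dots> \<le> 27*C/(real k)^2"
      using kpos C0 by (intro divide_left_mono power_mono) auto
    also have "\<dots> = 9 * L_est * D^3 / (real k)^2" by (simp add: C_def)
    finally show ?thesis .
  qed
  have phicont: "continuous_on UNIV phi"
    unfolding phi_def loc_norm_def
    by (intro continuous_intros bounded_linear.continuous_on[OF matrix_vector_mul_bounded_linear])
  have "compact (phi ` closure S)"
    using level_bdd unfolding S_def[symmetric]
    by (intro compact_continuous_image continuous_on_subset[OF phicont]) auto
  then have "bdd_above (phi ` closure S)" by (intro bounded_imp_bdd_above compact_imp_bounded)
  then have bdd: "bdd_above (phi ` S)" by (rule bdd_above_mono) (intro image_mono closure_subset)
  have dR: "d t \<le> R" for t
  proof -
    define h where "h = X t - xs"
    define rho where "rho = loc_norm H xs h"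
    have rho0: "rho \<ge> 0" unfolding rho_def by (rule A.loc_nonneg)
    have "\<bar>h \<bullet> ((H (X t) - H xs) *v h)\<bar> \<le> L_semi * loc_norm H xs (X t - xs) * rho^2"
      unfolding rho_def by (rule A.ssc_bound)
    then have b1: "\<bar>h \<bullet> ((H (X t) - H xs) *v h)\<bar> \<le> L_semi * rho^3"
      by (simp add: rho_def h_def power2_eq_square power3_eq_cube)
    have "L_semi * rho^3 \<le> L_est * rho^3" using L_ge rho0 by (intro mult_right_mono) auto
    moreover have "h \<bullet> (H (X t) *v h) = h \<bullet> (H xs *v h) + h \<bullet> ((H (X t) - H xs) *v h)"
      by (simp add: matrix_vector_mult_diff_rdistrib inner_diff_right)
    moreover have "h \<bullet> (H xs *v h) = rho^2" unfolding rho_def by (rule A.loc_sq[symmetric])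
    ultimately have "h \<bullet> (H (X t) *v h) \<le> rho^2 + L_est * rho^3" using b1 by linarith
    then have "d t \<le> phi (X t)" unfolding d_def phi_def loc_norm_def rho_def h_def
      by (intro real_sqrt_le_mono) (simp add: loc_norm_def)
    also have "\<dots> \<le> R" unfolding R_def using lvl[of t] bdd by (intro cSUP_upper) (auto simp: S_def)
    finally show ?thesis .
  qed
  have DR: "D \<le> R" unfolding D_def by (intro Max.boundedI) (auto simp: dR)
  have final2: "9 * L_est * D^3 / (real k)^2 \<le> 9 * L_est * R^3 / (real k)^2"
  proof -
    have "D^3 \<le> R^3" using DR D0 by (intro power_mono) auto
    then show ?thesis using L_pos kpos by (intro divide_right_mono mult_left_mono) auto
  qed
  show ?thesis using final1 final2 unfolding D_def d_def X_def R_def phi_def S_def by blast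
qed


end
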